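(* Let $N\ge1$, $n\ge1$, let $P(z_1,\dots,z_n)$ be a symmetric Laurent polynomial, regarded as a multiplication operator on $F_{N,n}$, and let $\omega_*$ be as in the context. Then for every $f\in F_{N,n}$, $$\omega_*(Pf)=P(x_1^{-N},\dots,x_n^{-N})\,\omega_*(f).$$
   Context: For $k\in\mathbb Z$, $\underline{k}\in\{1,\dots,N\}$, $\overline{k}\in\mathbb Z$ unique with $k=\underline{k}-N\overline{k}$. $V=\mathbb C^N$ with basis $v_1,\dots,v_N$. On $\mathbb C[z_1^{\pm1},\dots,z_n^{\pm1}]\otimes V^{\otimes n}$, $K_{ij}$ swaps $z_i,z_j$ and $P_{ij}$ swaps the $i$-th and $j$-th factors of $V^{\otimes n}$; $F_{N,n}=\{f:K_{ij}f=-P_{ij}f\ \forall i\neq j\}$. For $k\in\mathbb Z^n$, $\hat u_k=\sum_{w\in S_n}\mathrm{sign}(w)z_1^{\overline{k_{w(1)}}}\cdots z_n^{\overline{k_{w(n)}}}\otimes v_{\underline{k_{w(1)}}}\otimes\cdots\otimes v_{\underline{k_{w(n)}}}$; the $\hat u_k$ with $k_1>\dots>k_n$ form a basis of $F_{N,n}$. For $k\in\mathbb Z^n$, $\hat a_k=\sum_{w\in S_n}\mathrm{sign}(w)x_{w(1)}^{k_1}\cdots x_{w(n)}^{k_n}$, a skew-symmetric Laurent polynomial in $x_1,\dots,x_n$. $\omega_*$ is the linear isomorphism from $F_{N,n}$ onto the space of skew-symmetric Laurent polynomials in $x_1,\dots,x_n$ with $\omega_*(\hat u_k)=\hat a_k$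 for $k_1>\dots>k_n$. *)

theory Defs
  imports Complex_Main "HOL-Combinatorics.Permutations"
begin

text \<open>Variables z_1..z_n (resp. x_1..x_n) and tensor factors are indexed by
list positions 0..n-1. A Laurent monomial is an exponent list (int list of length n).
An element of C[z^{+-1}] tensor V^{tensor n} is a finitely supported function on pairs
(exponent list e, index list v) with v a list of n indices in 1..N, standing for
z^e tensor v_{v_1} tensor ... tensor v_{v_n}.\<close>

definition lswap :: "nat \<Rightarrow> nat \<Rightarrow> 'a list \<Rightarrow> 'a list" where
  "lswap i j xs = xs[i := xs ! j, j := xs ! i]"

definition laurent :: "nat \<Rightarrow> (int list \<Rightarrow> complex) set" where
  "laurent n = {P. finite {e. P e \<noteq> 0} \<and> (\<forall>e. P e \<noteq> 0 \<longrightarrow> length e = n)}"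

definition symmetric_laurent :: "nat \<Rightarrow> (int list \<Rightarrow> complex) \<Rightarrow> bool" where
  "symmetric_laurent n P \<longleftrightarrow> P \<in> laurent n \<and>
     (\<forall>i j e. i < n \<longrightarrow> j < n \<longrightarrow> P (lswap i j e) = P e)"

definition tensor_space :: "nat \<Rightarrow> nat \<Rightarrow> (int list \<times> nat list \<Rightarrow> complex) set" where
  "tensor_space N n = {f. finite {x. f x \<noteq> 0} \<and>
     (\<forall>e v. f (e, v) \<noteq> 0 \<longrightarrow> length e = n \<and> length v = n \<and> set v \<subseteq> {1..N})}"

text \<open>K_ij swaps z_i and z_j; P_ij swaps tensor factors i and j.\<close>
definition Kop :: "nat \<Rightarrow> nat \<Rightarrow> (int list \<times> nat list \<Rightarrow> complex) \<Rightarrow> (int list \<times> nat list \<Rightarrow> complex)" where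
  "Kop i j f = (\<lambda>(e, v). f (lswap i j e, v))"

definition Pop :: "nat \<Rightarrow> nat \<Rightarrow> (int list \<times> nat list \<Rightarrow> complex) \<Rightarrow> (int list \<times> nat list \<Rightarrow> complex)" where
  "Pop i j f = (\<lambda>(e, v). f (e, lswap i j v))"

definition F_space :: "nat \<Rightarrow> nat \<Rightarrow> (int list \<times> nat list \<Rightarrow> complex) set" where
  "F_space N n = {f \<in> tensor_space N n.
     \<forall>i j. i < n \<longrightarrow> j < n \<longrightarrow> i \<noteq> j \<longrightarrow> Kop i j f = (\<lambda>x. - Pop i j f x)}"

text \<open>underline k in {1..N} and overline k with k = underline k - N * overline k.\<close>
definition ul :: "nat \<Rightarrow> int \<Rightarrow> nat" where
  "ul N k = nat ((k - 1) mod int N + 1)"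

definition ol :: "nat \<Rightarrow> int \<Rightarrow> int" where
  "ol N k = - ((k - 1) div int N)"

definition uhat :: "nat \<Rightarrow> nat \<Rightarrow> int list \<Rightarrow> (int list \<times> nat list \<Rightarrow> complex)" where
  "uhat N n k = (\<lambda>x. \<Sum>w\<in>{w. w permutes {0..<n}}.
      of_int (sign w) * (if x = (map (\<lambda>i. ol N (k ! w i)) [0..<n], map (\<lambda>i. ul N (k ! w i)) [0..<n])
                         then 1 else 0))"

text \<open>ahat k = sum_w sign w x_{w(1)}^{k_1}...x_{w(n)}^{k_n}: the exponent of x_{w(i)} is k_i.\<close>
definition ahat :: "nat \<Rightarrow> int list \<Rightarrow> (int list \<Rightarrow> complex)" where
  "ahat n k = (\<lambda>e. \<Sum>w\<in>{w. w permutes {0..<n}}.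
      of_int (sign w) * (if e = map (\<lambda>i. k ! inv w i) [0..<n] then 1 else 0))"

definition mult_op :: "nat \<Rightarrow> (int list \<Rightarrow> complex) \<Rightarrow> (int list \<times> nat list \<Rightarrow> complex) \<Rightarrow> (int list \<times> nat list \<Rightarrow> complex)" where
  "mult_op n P f = (\<lambda>(e, v). if length e = n then
      (\<Sum>d\<in>{d. P d \<noteq> 0}. P d * f (map2 (-) e d, v)) else 0)"

text \<open>Multiplication of g by P(x_1^{-N},...,x_n^{-N}).\<close>
definition subst_mult :: "nat \<Rightarrow> nat \<Rightarrow> (int list \<Rightarrow> complex) \<Rightarrow> (int list \<Rightarrow> complex) \<Rightarrow> (int list \<Rightarrow> complex)" where
  "subst_mult N n P g = (\<lambda>e. if length e = n then
      (\<Sum>d\<in>{d. P d \<noteq> 0}. P d * g (map2 (\<lambda>a b. a + int N * b) e d)) else 0)"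

end

theory Submission
  imports Defs
begin
lemma ul_int: "N \<ge> 1 \<Longrightarrow> int (ul N a) = (a - 1) mod int N + 1"
  unfolding ul_def by simp
lemma ul_ol_id: "N \<ge> 1 \<Longrightarrow> int (ul N a) - int N * ol N a = a"
proof -
  assume N: "N \<ge> 1"
  have "(a - 1) div int N * int N + (a - 1) mod int N = a - 1" by (rule div_mult_mod_eq)
  then show ?thesis using ul_int[OF N] unfolding ol_def by (simp add: algebra_simps)
qed
lemma ul_range: "N \<ge> 1 \<Longrightarrow> ul N a \<in> {1..N}"
proof -
  assume N: "N \<ge> 1"
  have "0 \<le> (a - 1) mod int N" "(a - 1) mod int N < int N" using N by auto
  then show ?thesis unfolding ul_def by auto
qed
lemma ul_shift: "N \<ge> 1 \<Longrightarrow> ul N (a + int N * b) = ul N a"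
proof -
  assume N: "N \<ge> 1"
  have "(a + int N * b - 1) = (a - 1) + b * int N" by simp
  then show ?thesis unfolding ul_def by (metis mod_mult_self1)
qed
lemma ol_shift: "N \<ge> 1 \<Longrightarrow> ol N (a + int N * b) = ol N a - b"
proof -
  assume N: "N \<ge> 1"
  have "(a + int N * b - 1) = (a - 1) + b * int N" by simp
  moreover have "((a - 1) + b * int N) div int N = (a - 1) div int N + b"
    using N div_mult_self1[of "int N" "a - 1" b] by simp
  ultimately have "(a + int N * b - 1) div int N = (a - 1) div int N + b" by metis
  then show ?thesis unfolding ol_def by simp
qed
lemma ul_inv: "N \<ge> 1 \<Longrightarrow> v \<in> {1..N} \<Longrightarrow> ul N (int v - int N * e) = v"
proof -
  assume N: "N \<ge> 1" and v: "v \<in> {1..N}"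
  have "ul N (int v - int N * e) = ul N (int v + int N * (- e))" by simp
  also have "\<dots> = ul N (int v)" using ul_shift[OF N] by blast
  also have "\<dots> = v" using v unfolding ul_def by (simp add: mod_pos_pos_trivial)
  finally show ?thesis .
qed
lemma ol_inv: "N \<ge> 1 \<Longrightarrow> v \<in> {1..N} \<Longrightarrow> ol N (int v - int N * e) = e"
proof -
  assume N: "N \<ge> 1" and v: "v \<in> {1..N}"
  have "ol N (int v - int N * e) = ol N (int v + int N * (- e))" by simp
  also have "\<dots> = ol N (int v) + e" using ol_shift[OF N, of "int v" "-e"] by simp
  also have "ol N (int v) = 0" using v unfolding ol_def by (simp add: div_pos_pos_trivial)
  finally show ?thesis by simp
qed
definition pt :: "nat \<Rightarrow> int list \<Rightarrow> int list \<times> nat list" where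
  "pt N k = (map (ol N) k, map (ul N) k)"
definition cw :: "int list \<Rightarrow> (nat \<Rightarrow> nat) \<Rightarrow> nat \<Rightarrow> int list" where
  "cw k w n = map (\<lambda>i. k ! w i) [0..<n]"
definition rec :: "nat \<Rightarrow> int list \<times> nat list \<Rightarrow> int list" where
  "rec N x = map2 (\<lambda>e v. int v - int N * e) (fst x) (snd x)"
definition phi :: "nat \<Rightarrow> nat \<Rightarrow> (int list \<times> nat list \<Rightarrow> complex) \<Rightarrow> int list \<Rightarrow> complex" where
  "phi N n g = (\<lambda>k. if length k = n then g (pt N k) else 0)"

lemma rec_pt: "N \<ge> 1 \<Longrightarrow> rec N (pt N k) = k"
  unfolding rec_def pt_def by (simp add: map2_map_map ul_ol_id)

lemma pt_inj: "N \<ge> 1 \<Longrightarrow> pt N a = pt N b \<Longrightarrow> a = b"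
  by (metis rec_pt)

lemma pt_eq_iff: "N \<ge> 1 \<Longrightarrow> (pt N a = pt N b) = (a = b)"
  using pt_inj by blast

lemma pt_rec: "N \<ge> 1 \<Longrightarrow> length e = length v \<Longrightarrow> set v \<subseteq> {1..N} \<Longrightarrow> pt N (rec N (e, v)) = (e, v)"
  unfolding rec_def pt_def
  by (auto intro!: nth_equalityI simp: ul_inv ol_inv nth_mem subset_iff)

lemma length_pt: "pt N k = (e, v) \<Longrightarrow> length e = length k \<and> length v = length k"
  unfolding pt_def by auto

lemma set_pt: "N \<ge> 1 \<Longrightarrow> pt N k = (e, v) \<Longrightarrow> set v \<subseteq> {1..N}"
  unfolding pt_def using ul_range by auto

lemma length_lswap[simp]: "length (lswap a b xs) = length xs"
  unfolding lswap_def by simp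

lemma lswap_nth: "a < length xs \<Longrightarrow> b < length xs \<Longrightarrow> i < length xs \<Longrightarrow>
   lswap a b xs ! i = xs ! Transposition.transpose a b i"
  unfolding lswap_def by (auto simp: nth_list_update transpose_def)

lemma lswap_lswap: "a < length xs \<Longrightarrow> b < length xs \<Longrightarrow> lswap a b (lswap a b xs) = xs"
  by (rule nth_equalityI) (auto simp: lswap_nth transpose_def)

lemma lswap_map: "a < length xs \<Longrightarrow> b < length xs \<Longrightarrow> lswap a b (map g xs) = map g (lswap a b xs)"
  by (rule nth_equalityI) (auto simp: lswap_nth transpose_def)

lemma map2_lswap: "length xs = length ys \<Longrightarrow> a < length xs \<Longrightarrow> b < length xs \<Longrightarrow>
   map2 g (lswap a b xs) (lswap a b ys) = lswap a b (map2 g xs ys)"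
  by (rule nth_equalityI) (auto simp: lswap_nth transpose_def)

lemma pt_lswap: "a < length k \<Longrightarrow> b < length k \<Longrightarrow> pt N (lswap a b k) = (lswap a b (fst (pt N k)), lswap a b (snd (pt N k)))"
  unfolding pt_def by (simp add: lswap_map)

lemma length_cw[simp]: "length (cw k w n) = n"
  unfolding cw_def by simp

lemma cw_nth: "i < n \<Longrightarrow> cw k w n ! i = k ! w i"
  unfolding cw_def by simp

lemma cw_id: "length k = n \<Longrightarrow> cw k id n = k"
  by (rule nth_equalityI) (auto simp: cw_nth)

lemma cw_transpose: "length k = n \<Longrightarrow> a < n \<Longrightarrow> b < n \<Longrightarrow> cw k (Transposition.transpose a b) n = lswap a b k"
  by (rule nth_equalityI) (auto simp: cw_nth lswap_nth)

lemma cw_comp: "p permutes {0..<n} \<Longrightarrow> cw k (q \<circ> p) n = cw (cw k q n) p n"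
proof (rule nth_equalityI)
  fix i assume p: "p permutes {0..<n}" and "i < length (cw k (q \<circ> p) n)"
  then have i: "i < n" and "p i < n" using permutes_in_image[OF p, of i] by auto
  then show "cw k (q \<circ> p) n ! i = cw (cw k q n) p n ! i" by (simp add: cw_nth)
qed simp

lemma lswap_cw: "a < n \<Longrightarrow> b < n \<Longrightarrow> lswap a b (cw k w n) = cw k (w \<circ> Transposition.transpose a b) n"
  by (rule nth_equalityI) (auto simp: cw_nth lswap_nth transpose_def)

lemma set_cw: "w permutes {0..<n} \<Longrightarrow> length k = n \<Longrightarrow> set (cw k w n) = set k"
proof -
  assume w: "w permutes {0..<n}" and k: "length k = n"
  have "set (cw k w n) = (\<lambda>i. k ! i) ` (w ` {0..<n})" unfolding cw_def by auto
  also have "\<dots> = (\<lambda>i. k ! i) ` {0..<n}" using permutes_image[OF w] by simp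
  also have "\<dots> = set k" using k by (auto simp: set_conv_nth)
  finally show ?thesis .
qed

lemma distinct_cw: "w permutes {0..<n} \<Longrightarrow> length k = n \<Longrightarrow> distinct k \<Longrightarrow> distinct (cw k w n)"
proof -
  assume w: "w permutes {0..<n}" and k: "length k = n" and d: "distinct k"
  show ?thesis unfolding distinct_conv_nth
  proof (intro allI impI)
    fix i j assume "i < length (cw k w n)" "j < length (cw k w n)" "i \<noteq> j"
    then have "i < n" "j < n" "w i \<noteq> w j" "w i < n" "w j < n"
      using permutes_inj[OF w] permutes_in_image[OF w] by (auto dest: injD)
    then show "cw k w n ! i \<noteq> cw k w n ! j" using d k by (simp add: cw_nth nth_eq_iff_index_eq)
  qed
qed

lemma sorted_gt_distinct: "sorted_wrt (>) (k::int list) \<Longrightarrow> sorted (rev k) \<and> distinct (rev k)"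
  by (metis strict_sorted_iff sorted_wrt_rev)

lemma perm_of_permutes: "w permutes {0..<(n::nat)} \<Longrightarrow> permutation w"
  by (metis finite_atLeastLessThan permutes_imp_permutation)

lemma tensor_zero: "f \<in> tensor_space N n \<Longrightarrow> \<not> (length e = n \<and> length v = n \<and> set v \<subseteq> {1..N}) \<Longrightarrow> f (e, v) = 0"
  unfolding tensor_space_def by blast

lemma F_swap:
  assumes f: "f \<in> F_space N n" and ab: "a < n" "b < n" "a \<noteq> b"
  shows "f (lswap a b e, lswap a b v) = - f (e, v)"
proof -
  have ft: "f \<in> tensor_space N n" using f unfolding F_space_def by simp
  have "Kop a b f = (\<lambda>x. - Pop a b f x)" using f ab unfolding F_space_def by blast
  then have "Kop a b f (e, lswap a b v) = - Pop a b f (e, lswap a b v)" by metis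
  then have eq: "f (lswap a b e, lswap a b v) = - f (e, lswap a b (lswap a b v))"
    unfolding Kop_def Pop_def by simp
  show ?thesis
  proof (cases "length v = n")
    case True
    then show ?thesis using eq ab by (simp add: lswap_lswap)
  next
    case False
    then show ?thesis using tensor_zero[OF ft] by (metis length_lswap neg_0_equal_iff_equal)
  qed
qed

lemma F_of_swap:
  assumes ft: "f \<in> tensor_space N n"
    and sw: "\<And>a b e v. a < n \<Longrightarrow> b < n \<Longrightarrow> a \<noteq> b \<Longrightarrow> length e = n \<Longrightarrow> length v = n \<Longrightarrow>
       f (lswap a b e, lswap a b v) = - f (e, v)"
  shows "f \<in> F_space N n"
  unfolding F_space_def
proof (intro CollectI conjI allI impI ft)
  fix i j assume ij: "i < n" "j < n" "i \<noteq> j"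
  show "Kop i j f = (\<lambda>x. - Pop i j f x)"
  proof
    fix x :: "int list \<times> nat list"
    obtain e v where x: "x = (e, v)" by fastforce
    show "Kop i j f x = - Pop i j f x"
    proof (cases "length e = n \<and> length v = n")
      case True
      have "f (lswap i j e, v) = f (lswap i j e, lswap i j (lswap i j v))"
        using True ij by (simp add: lswap_lswap)
      also have "\<dots> = - f (e, lswap i j v)" using sw[OF ij] True by simp
      finally show ?thesis unfolding x Kop_def Pop_def by simp
    next
      case False
      then have "f (lswap i j e, v) = 0" "f (e, lswap i j v) = 0"
        using tensor_zero[OF ft] by (metis length_lswap)+
      then show ?thesis unfolding x Kop_def Pop_def by simp
    qed
  qed
qed

lemma perm_sign:
  assumes f: "f \<in> F_space N n" and w: "w permutes {0..<n}"
    and k: "length k = n"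
  shows "f (pt N (cw k w n)) = of_int (sign w) * f (pt N k)"
  using w finite_atLeastLessThan[of 0 n] k
proof (induction w arbitrary: k rule: permutes_induct)
  case id
  then show ?case by (simp add: cw_id[unfolded id_def] sign_id)
next
  case (swap a b p)
  have ab: "a < n" "b < n" "a \<noteq> b" using swap by auto
  have pp: "p permutes {0..<n}" using swap by blast
  have IH: "f (pt N (cw k' p n)) = of_int (sign p) * f (pt N k')" if "length k' = n" for k'
    using swap that by blast
  have main: "f (pt N (cw k (Transposition.transpose a b \<circ> p) n)) = of_int (sign (Transposition.transpose a b \<circ> p)) * f (pt N k)"
    if k: "length k = n" for k
  proof -
  have "cw k (Transposition.transpose a b \<circ> p) n = cw (lswap a b k) p n"
    using cw_comp[OF pp] cw_transpose[OF k ab(1,2)] by simp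
  then have "f (pt N (cw k (Transposition.transpose a b \<circ> p) n)) = of_int (sign p) * f (pt N (lswap a b k))"
    using IH k by simp
  also have "f (pt N (lswap a b k)) = - f (pt N k)"
    using F_swap[OF f ab] pt_lswap[of a k b N] k ab by (simp add: pt_def)
  also have "sign (Transposition.transpose a b \<circ> p) = - sign p"
    using sign_compose[OF perm_of_permutes[OF permutes_swap_id[of a "{0..<n}" b]] perm_of_permutes[OF pp]] ab
    by (simp add: sign_swap_id)
  ultimately show "f (pt N (cw k (Transposition.transpose a b \<circ> p) n)) = of_int (sign (Transposition.transpose a b \<circ> p)) * f (pt N k)" by (simp add: comp_def)
  qed
  then show ?case using swap by blast
qed

lemma uhat_eq: "uhat N n k x = (\<Sum>w\<in>{w. w permutes {0..<n}}. of_int (sign w) * (if x = pt N (cw k w n) then 1 else 0))"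
  unfolding uhat_def pt_def cw_def by (simp add: comp_def)

lemma sum_zero_ex: "(\<Sum>x\<in>A. g x) \<noteq> (0::complex) \<Longrightarrow> \<exists>x\<in>A. g x \<noteq> 0"
  by (meson sum.neutral)

lemma uhat_F:
  assumes N: "N \<ge> 1" and k: "length k = n"
  shows "uhat N n k \<in> F_space N n"
proof (rule F_of_swap)
  let ?W = "{w. w permutes {0..<n}}"
  have finW: "finite ?W" by (simp add: finite_permutations)
  have sub: "{x. uhat N n k x \<noteq> 0} \<subseteq> (\<lambda>w. pt N (cw k w n)) ` ?W"
  proof
    fix x assume "x \<in> {x. uhat N n k x \<noteq> 0}"
    then have "(\<Sum>w\<in>?W. of_int (sign w) * (if x = pt N (cw k w n) then 1 else 0)) \<noteq> (0::complex)"
      by (simp add: uhat_eq)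
    then have "\<exists>w\<in>?W. of_int (sign w) * (if x = pt N (cw k w n) then 1 else 0) \<noteq> (0::complex)"
      by (rule sum_zero_ex)
    then obtain w where "w \<in> ?W" "of_int (sign w) * (if x = pt N (cw k w n) then 1 else 0) \<noteq> (0::complex)"
      by blast
    then have "w \<in> ?W" "x = pt N (cw k w n)" by (auto split: if_splits)
    then show "x \<in> (\<lambda>w. pt N (cw k w n)) ` ?W" by blast
  qed
  show "uhat N n k \<in> tensor_space N n"
    unfolding tensor_space_def
  proof (intro CollectI conjI allI impI)
    show "finite {x. uhat N n k x \<noteq> 0}" using finite_subset[OF sub] finW by blast
    fix e v assume "uhat N n k (e, v) \<noteq> 0"
    then obtain w where "(e, v) = pt N (cw k w n)" using sub by blast
    then show "length e = n" "length v = n" "set v \<subseteq> {1..N}"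
      using length_pt[of N "cw k w n" e v] set_pt[OF N, of "cw k w n" e v] by auto
  qed
  fix a b :: nat and e :: "int list" and v :: "nat list"
  assume ab: "a < n" "b < n" "a \<noteq> b" and ev: "length e = n" "length v = n"
  let ?t = "Transposition.transpose a b"
  have tp: "?t permutes {0..<n}" using ab by (simp add: permutes_swap_id)
  have eqv: "((lswap a b e, lswap a b v) = pt N (cw k w n)) = ((e, v) = pt N (cw k (w \<circ> ?t) n))" for w
  proof -
    have "pt N (cw k (w \<circ> ?t) n) = (lswap a b (fst (pt N (cw k w n))), lswap a b (snd (pt N (cw k w n))))"
      using lswap_cw[OF ab(1,2), of k w] pt_lswap[of a "cw k w n" b N] ab by simp
    moreover have "length (fst (pt N (cw k w n))) = n" "length (snd (pt N (cw k w n))) = n"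
      by (simp_all add: pt_def)
    ultimately show ?thesis using ev ab
      by (smt (verit, ccfv_threshold) Pair_inject lswap_lswap prod.collapse)
  qed
  let ?G = "\<lambda>w. of_int (sign w) * (if (e, v) = pt N (cw k w n) then 1 else 0) :: complex"
  have "uhat N n k (e, v) = sum ?G ?W" by (simp add: uhat_eq)
  also have "\<dots> = sum (\<lambda>w. ?G (w \<circ> ?t)) ?W" by (rule sum_permutations_compose_right[OF tp])
  also have "\<dots> = sum (\<lambda>w. - (of_int (sign w) * (if (lswap a b e, lswap a b v) = pt N (cw k w n) then 1 else 0))) ?W"
  proof (rule sum.cong[OF refl])
    fix w assume "w \<in> ?W"
    then have "sign (w \<circ> ?t) = - sign w"
      using sign_compose[OF perm_of_permutes perm_of_permutes[OF tp], of w n] ab by (simp add: sign_swap_id)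
    then show "?G (w \<circ> ?t) = - (of_int (sign w) * (if (lswap a b e, lswap a b v) = pt N (cw k w n) then 1 else 0))"
      by (simp add: eqv)
  qed
  also have "\<dots> = - uhat N n k (lswap a b e, lswap a b v)" by (simp add: uhat_eq sum_negf)
  finally show "uhat N n k (lswap a b e, lswap a b v) = - uhat N n k (e, v)" by simp
qed

lemma ahat_eq: "ahat n k e = (\<Sum>w\<in>{w. w permutes {0..<n}}. of_int (sign w) * (if e = cw k (inv w) n then 1 else 0))"
  unfolding ahat_def cw_def by simp

lemma phi_uhat:
  assumes N: "N \<ge> 1" and k: "length k = n"
  shows "phi N n (uhat N n k) = ahat n k"
proof
  fix \<kappa> :: "int list"
  let ?W = "{w. w permutes {0..<n}}"
  show "phi N n (uhat N n k) \<kappa> = ahat n k \<kappa>"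
  proof (cases "length \<kappa> = n")
    case True
    let ?G = "\<lambda>w. of_int (sign w) * (if \<kappa> = cw k w n then 1 else 0) :: complex"
    have "phi N n (uhat N n k) \<kappa> = sum ?G ?W"
      unfolding phi_def using True by (simp add: uhat_eq pt_eq_iff[OF N])
    also have "\<dots> = sum (\<lambda>w. ?G (inv w)) ?W" by (rule sum_permutations_inverse)
    also have "\<dots> = ahat n k \<kappa>" unfolding ahat_eq
      by (rule sum.cong[OF refl]) (simp add: sign_inverse perm_of_permutes)
    finally show ?thesis .
  next
    case False
    then show ?thesis unfolding phi_def ahat_eq by (auto intro!: sum.neutral)
  qed
qed

lemma F_lin:
  assumes g: "g \<in> F_space N n" and h: "h \<in> F_space N n"
  shows "(\<lambda>x. a * g x + b * h x) \<in> F_space N n"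
proof (rule F_of_swap)
  have gt: "g \<in> tensor_space N n" and ht: "h \<in> tensor_space N n" using g h unfolding F_space_def by auto
  show "(\<lambda>x. a * g x + b * h x) \<in> tensor_space N n"
    unfolding tensor_space_def
  proof (intro CollectI conjI allI impI)
    have "{x. a * g x + b * h x \<noteq> 0} \<subseteq> {x. g x \<noteq> 0} \<union> {x. h x \<noteq> 0}" by auto
    moreover have "finite {x. g x \<noteq> 0}" "finite {x. h x \<noteq> 0}"
      using gt ht unfolding tensor_space_def by auto
    ultimately show "finite {x. a * g x + b * h x \<noteq> 0}"
      by (meson finite_Un finite_subset)
    fix e v assume "a * g (e, v) + b * h (e, v) \<noteq> 0"
    then have "g (e, v) \<noteq> 0 \<or> h (e, v) \<noteq> 0" by auto
    then show "length e = n" "length v = n" "set v \<subseteq> {1..N}"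
      using gt ht unfolding tensor_space_def by blast+
  qed
  fix i j :: nat and e :: "int list" and v :: "nat list"
  assume "i < n" "j < n" "i \<noteq> j"
  then show "a * g (lswap i j e, lswap i j v) + b * h (lswap i j e, lswap i j v) = - (a * g (e, v) + b * h (e, v))"
    using F_swap[OF g] F_swap[OF h] by (simp add: algebra_simps)
qed

lemma F_zero: "(\<lambda>x. 0) \<in> F_space N n"
  unfolding F_space_def tensor_space_def Kop_def Pop_def by (auto simp: fun_eq_iff)

lemma phi_mult:
  assumes N: "N \<ge> 1" and P: "P \<in> laurent n"
  shows "phi N n (mult_op n P f) = subst_mult N n P (phi N n f)"
proof
  fix k :: "int list"
  show "phi N n (mult_op n P f) k = subst_mult N n P (phi N n f) k"
  proof (cases "length k = n")
    case True
    have "phi N n (mult_op n P f) k = (\<Sum>d\<in>{d. P d \<noteq> 0}. P d * f (map2 (-) (map (ol N) k) d, map (ul N) k))"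
      unfolding phi_def mult_op_def pt_def using True by simp
    also have "\<dots> = (\<Sum>d\<in>{d. P d \<noteq> 0}. P d * phi N n f (map2 (\<lambda>a b. a + int N * b) k d))"
    proof (rule sum.cong[OF refl])
      fix d assume "d \<in> {d. P d \<noteq> 0}"
      then have d: "length d = n" using P unfolding laurent_def by auto
      have "pt N (map2 (\<lambda>a b. a + int N * b) k d) = (map2 (-) (map (ol N) k) d, map (ul N) k)"
        unfolding pt_def using d True by (auto intro!: nth_equalityI simp: ol_shift[OF N] ul_shift[OF N])
      then show "P d * f (map2 (-) (map (ol N) k) d, map (ul N) k) = P d * phi N n f (map2 (\<lambda>a b. a + int N * b) k d)"
        unfolding phi_def using d True by simp
    qed
    also have "\<dots> = subst_mult N n P (phi N n f) k"
      unfolding subst_mult_def using True by simp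
    finally show ?thesis .
  next
    case False
    then show ?thesis unfolding phi_def subst_mult_def by simp
  qed
qed

lemma mult_F:
  assumes N: "N \<ge> 1" and P: "symmetric_laurent n P" and f: "f \<in> F_space N n"
  shows "mult_op n P f \<in> F_space N n"
proof (rule F_of_swap)
  let ?D = "{d. P d \<noteq> 0}"
  have finD: "finite ?D" and lenD: "\<And>d. d \<in> ?D \<Longrightarrow> length d = n"
    and Psym: "\<And>i j d. i < n \<Longrightarrow> j < n \<Longrightarrow> P (lswap i j d) = P d"
    using P unfolding symmetric_laurent_def laurent_def by auto
  have ft: "f \<in> tensor_space N n" using f unfolding F_space_def by simp
  have ex: "\<exists>d\<in>?D. f (map2 (-) e d, v) \<noteq> 0 \<and> length e = n" if "mult_op n P f (e, v) \<noteq> 0" for e v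
  proof -
    have len: "length e = n" using that unfolding mult_op_def by (auto split: if_splits)
    then have "(\<Sum>d\<in>?D. P d * f (map2 (-) e d, v)) \<noteq> 0" using that unfolding mult_op_def by simp
    then have "\<exists>d\<in>?D. P d * f (map2 (-) e d, v) \<noteq> 0" by (rule sum_zero_ex)
    then show ?thesis using len by auto
  qed
  show "mult_op n P f \<in> tensor_space N n"
    unfolding tensor_space_def
  proof (intro CollectI conjI allI impI)
    have "{x. mult_op n P f x \<noteq> 0} \<subseteq> (\<lambda>(x, d). (map2 (+) (fst x) d, snd x)) ` ({x. f x \<noteq> 0} \<times> ?D)"
    proof
      fix x assume "x \<in> {x. mult_op n P f x \<noteq> 0}"
      then obtain e v where x: "x = (e, v)" and "mult_op n P f (e, v) \<noteq> 0" by (cases x) auto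
      then obtain d where d: "d \<in> ?D" "f (map2 (-) e d, v) \<noteq> 0" "length e = n" using ex by blast
      have "e = map2 (+) (map2 (-) e d) d" using d lenD[OF d(1)] by (auto intro!: nth_equalityI)
      then have "x = (\<lambda>(x, d). (map2 (+) (fst x) d, snd x)) ((map2 (-) e d, v), d)" using x by simp
      moreover have "((map2 (-) e d, v), d) \<in> {x. f x \<noteq> 0} \<times> ?D" using d by simp
      ultimately show "x \<in> (\<lambda>(x, d). (map2 (+) (fst x) d, snd x)) ` ({x. f x \<noteq> 0} \<times> ?D)" by blast
    qed
    moreover have "finite {x. f x \<noteq> 0}" using ft unfolding tensor_space_def by simp
    ultimately show "finite {x. mult_op n P f x \<noteq> 0}"
      using finD by (meson finite_SigmaI finite_imageI finite_subset)
    fix e v assume "mult_op n P f (e, v) \<noteq> 0"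
    then obtain d where d: "d \<in> ?D" "f (map2 (-) e d, v) \<noteq> 0" "length e = n" using ex by blast
    then show "length e = n" "length v = n" "set v \<subseteq> {1..N}"
      using ft unfolding tensor_space_def by blast+
  qed
  fix a b :: nat and e :: "int list" and v :: "nat list"
  assume ab: "a < n" "b < n" "a \<noteq> b" and ev: "length e = n" "length v = n"
  let ?G = "\<lambda>d. P d * f (map2 (-) (lswap a b e) d, lswap a b v)"
  have "mult_op n P f (lswap a b e, lswap a b v) = sum ?G ?D"
    unfolding mult_op_def using ev by simp
  also have "\<dots> = (\<Sum>d\<in>?D. ?G (lswap a b d))"
    by (rule sum.reindex_bij_witness[where i="lswap a b" and j="lswap a b"])
      (use lenD Psym ab in \<open>auto simp: lswap_lswap\<close>)
  also have "\<dots> = (\<Sum>d\<in>?D. - (P d * f (map2 (-) e d, v)))"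
  proof (rule sum.cong[OF refl])
    fix d assume d: "d \<in> ?D"
    have "map2 (-) (lswap a b e) (lswap a b d) = lswap a b (map2 (-) e d)"
      using map2_lswap[of e d a b] lenD[OF d] ev ab by simp
    then show "?G (lswap a b d) = - (P d * f (map2 (-) e d, v))"
      using Psym[OF ab(1,2)] F_swap[OF f ab] by simp
  qed
  also have "\<dots> = - mult_op n P f (e, v)"
    unfolding mult_op_def using ev by (simp add: sum_negf)
  finally show "mult_op n P f (lswap a b e, lswap a b v) = - mult_op n P f (e, v)" .
qed

lemma sorted_eq: "sorted_wrt (>) (k::int list) \<Longrightarrow> sorted_wrt (>) k' \<Longrightarrow> set k = set k' \<Longrightarrow> k = k'"
proof -
  assume a: "sorted_wrt (>) k" "sorted_wrt (>) k'" "set k = set k'"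
  have "rev k = rev k'"
    by (rule sorted_distinct_set_unique) (use sorted_gt_distinct[OF a(1)] sorted_gt_distinct[OF a(2)] a(3) in auto)
  then show ?thesis by simp
qed

lemma sort_gt: "distinct (\<kappa>::int list) \<Longrightarrow> sorted_wrt (>) (rev (sort \<kappa>))"
  by (simp add: sorted_wrt_rev strict_sorted_iff)

lemma exists_perm:
  assumes d: "distinct \<kappa>" and l: "length \<kappa> = n" and s: "set \<kappa> = set k0"
    and l0: "length k0 = n" and d0: "distinct k0"
  shows "\<exists>w. w permutes {0..<n} \<and> \<kappa> = cw k0 w n"
proof -
  define w where "w = (\<lambda>i. if i < n then the_inv_into {0..<n} (nth k0) (\<kappa> ! i) else i)"
  have injk: "inj_on (nth k0) {0..<n}" using d0 l0 by (simp add: inj_on_nth)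
  have img: "\<kappa> ! i \<in> nth k0 ` {0..<n}" if "i < n" for i
    using that l l0 s by (metis atLeast0LessThan in_set_conv_nth lessThan_iff nth_mem image_eqI)
  have win: "w i < n" if "i < n" for i
    using that the_inv_into_into[OF injk img[OF that], of "{0..<n}"] unfolding w_def by auto
  have wnth: "k0 ! w i = \<kappa> ! i" if "i < n" for i
    using that f_the_inv_into_f[OF injk img[OF that]] unfolding w_def by auto
  have inj: "inj_on w {0..<n}"
  proof
    fix i j assume "i \<in> {0..<n}" "j \<in> {0..<n}" "w i = w j"
    then have "\<kappa> ! i = \<kappa> ! j" "i < n" "j < n" using wnth by auto (metis wnth)
    then show "i = j" using d l by (simp add: nth_eq_iff_index_eq)
  qed
  have "w ` {0..<n} = {0..<n}"
    by (rule endo_inj_surj) (use win inj in auto)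
  then have "bij_betw w {0..<n} {0..<n}" using inj by (simp add: bij_betw_def)
  then have "w permutes {0..<n}" by (rule bij_imp_permutes) (simp add: w_def)
  moreover have "\<kappa> = cw k0 w n" using l by (auto intro!: nth_equalityI simp: cw_nth wnth)
  ultimately show ?thesis by blast
qed

lemma uniq_perm:
  assumes d: "distinct k" and l: "length k = n" and w: "w permutes {0..<n}" and w': "w' permutes {0..<n}"
    and eq: "cw k w n = cw k w' n"
  shows "w = w'"
proof
  fix i show "w i = w' i"
  proof (cases "i < n")
    case True
    then have "k ! w i = k ! w' i" "w i < n" "w' i < n"
      using eq permutes_in_image[OF w] permutes_in_image[OF w'] by (metis cw_nth, auto)
    then show ?thesis using d l by (simp add: nth_eq_iff_index_eq)
  next
    case False
    then show ?thesis using permutes_not_in[OF w] permutes_not_in[OF w'] by auto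
  qed
qed

lemma length_rec: "length e = length v \<Longrightarrow> length (rec N (e, v)) = length e"
  unfolding rec_def by simp

lemma uhat_pt: "N \<ge> 1 \<Longrightarrow> uhat N n k (pt N \<kappa>) = (\<Sum>w\<in>{w. w permutes {0..<n}}. of_int (sign w) * (if \<kappa> = cw k w n then 1 else 0))"
  by (simp add: uhat_eq pt_eq_iff)

lemma finS:
  assumes N: "N \<ge> 1" and g: "g \<in> F_space N n"
  shows "finite {k. length k = n \<and> sorted_wrt (>) k \<and> g (pt N k) \<noteq> 0}"
proof -
  have gt: "g \<in> tensor_space N n" using g unfolding F_space_def by simp
  have "{k. length k = n \<and> sorted_wrt (>) k \<and> g (pt N k) \<noteq> 0} \<subseteq> pt N -` {x. g x \<noteq> 0}" by auto
  moreover have "finite (pt N -` {x. g x \<noteq> 0})"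
    by (rule finite_vimageI) (use gt pt_inj[OF N] in \<open>auto simp: tensor_space_def inj_def\<close>)
  ultimately show ?thesis by (rule finite_subset)
qed

lemma spanning:
  assumes N: "N \<ge> 1" and g: "g \<in> F_space N n"
  shows "g x = (\<Sum>k\<in>{k. length k = n \<and> sorted_wrt (>) k \<and> g (pt N k) \<noteq> 0}. g (pt N k) * uhat N n k x)"
proof -
  let ?S = "{k. length k = n \<and> sorted_wrt (>) k \<and> g (pt N k) \<noteq> 0}"
  let ?W = "{w. w permutes {0..<n}}"
  have gt: "g \<in> tensor_space N n" using g unfolding F_space_def by simp
  obtain e v where x: "x = (e, v)" by (cases x)
  show ?thesis
  proof (cases "length e = n \<and> length v = n \<and> set v \<subseteq> {1..N}")
    case False
    have "g x = 0" using tensor_zero[OF gt False] x by simp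
    moreover have "uhat N n k x = 0" for k
      unfolding uhat_eq
    proof (rule sum.neutral, intro ballI)
      fix w assume "w \<in> ?W"
      have "x \<noteq> pt N (cw k w n)"
        using False length_pt[of N "cw k w n" e v] set_pt[OF N, of "cw k w n" e v] x by auto
      then show "of_int (sign w) * (if x = pt N (cw k w n) then 1 else 0) = (0::complex)" by simp
    qed
    ultimately show ?thesis by simp
  next
    case True
    define \<kappa> where "\<kappa> = rec N (e, v)"
    have xk: "x = pt N \<kappa>" unfolding \<kappa>_def x using pt_rec[OF N] True by simp
    have lk: "length \<kappa> = n" unfolding \<kappa>_def using True length_rec by simp
    show ?thesis
    proof (cases "distinct \<kappa>")
      case False
      then obtain i j where ij: "i < n" "j < n" "i \<noteq> j" "\<kappa> ! i = \<kappa> ! j"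
        using lk by (auto simp: distinct_conv_nth)
      have "lswap i j \<kappa> = \<kappa>" using ij lk by (auto intro!: nth_equalityI simp: lswap_nth transpose_def)
      then have "g (pt N \<kappa>) = - g (pt N \<kappa>)"
        using F_swap[OF g ij(1-3), of "fst (pt N \<kappa>)" "snd (pt N \<kappa>)"] pt_lswap[of i \<kappa> j N] ij lk by simp
      then have "g x = 0" using xk by simp
      moreover have "uhat N n k x = 0" if "k \<in> ?S" for k
        unfolding xk uhat_pt[OF N]
      proof (rule sum.neutral, intro ballI)
        fix w assume w: "w \<in> ?W"
        have "distinct (cw k w n)" using distinct_cw[of w n k] w that sorted_gt_distinct[of k] by auto
        then have "\<kappa> \<noteq> cw k w n" using False by auto
        then show "of_int (sign w) * (if \<kappa> = cw k w n then 1 else 0) = (0::complex)" by simp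
      qed
      ultimately show ?thesis by simp
    next
      case True
      define k0 where "k0 = rev (sort \<kappa>)"
      have k0s: "sorted_wrt (>) k0" unfolding k0_def using sort_gt[OF True] .
      have k0l: "length k0 = n" and k0set: "set \<kappa> = set k0" unfolding k0_def using lk by auto
      have k0d: "distinct k0" using sorted_gt_distinct[OF k0s] by simp
      obtain w0 where w0: "w0 permutes {0..<n}" "\<kappa> = cw k0 w0 n"
        using exists_perm[OF True lk k0set k0l k0d] by blast
      have lhs: "g x = of_int (sign w0) * g (pt N k0)"
        using perm_sign[OF g w0(1) k0l] w0(2) xk by simp
      have uh: "uhat N n k x = (if k = k0 then of_int (sign w0) else 0)" if "k \<in> ?S" for k
      proof (cases "k = k0")
        case True
        have "uhat N n k x = (\<Sum>w\<in>?W. (if w = w0 then of_int (sign w) else 0))"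
          unfolding xk uhat_pt[OF N]
        proof (rule sum.cong[OF refl])
          fix w assume "w \<in> ?W"
          then have "(\<kappa> = cw k w n) = (w = w0)"
            using uniq_perm[OF k0d k0l _ w0(1)] w0(2) True by auto
          then show "of_int (sign w) * (if \<kappa> = cw k w n then 1 else 0) = (if w = w0 then of_int (sign w) else (0::complex))"
            by simp
        qed
        also have "\<dots> = of_int (sign w0)" using w0(1) by (simp add: finite_permutations)
        finally show ?thesis using True by simp
      next
        case False
        have "uhat N n k x = 0"
          unfolding xk uhat_pt[OF N]
        proof (rule sum.neutral, intro ballI)
          fix w assume w: "w \<in> ?W"
          have "\<kappa> \<noteq> cw k w n"
          proof
            assume "\<kappa> = cw k w n"
            then have "set \<kappa> = set k" using set_cw[of w n k] w that by auto
            then have "k = k0" using sorted_eq[of k k0] that k0s k0set by auto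
            then show False using False by simp
          qed
          then show "of_int (sign w) * (if \<kappa> = cw k w n then 1 else 0) = (0::complex)" by simp
        qed
        then show ?thesis using False by simp
      qed
      have finS: "finite ?S"
      proof -
        have "?S \<subseteq> pt N -` {x. g x \<noteq> 0}" by auto
        moreover have "finite (pt N -` {x. g x \<noteq> 0})"
          by (rule finite_vimageI) (use gt pt_inj[OF N] in \<open>auto simp: tensor_space_def inj_def\<close>)
        ultimately show ?thesis by (rule finite_subset)
      qed
      have "(\<Sum>k\<in>?S. g (pt N k) * uhat N n k x) = (\<Sum>k\<in>?S. if k = k0 then g (pt N k0) * of_int (sign w0) else 0)"
        by (rule sum.cong[OF refl]) (simp add: uh)
      also have "\<dots> = (if k0 \<in> ?S then g (pt N k0) * of_int (sign w0) else 0)"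
        using finS by simp
      also have "\<dots> = g x" using lhs k0s k0l by auto
      finally show ?thesis by simp
    qed
  qed
qed

theorem lemma3:
  fixes N n :: nat
    and P :: "int list \<Rightarrow> complex"
    and \<omega> :: "(int list \<times> nat list \<Rightarrow> complex) \<Rightarrow> (int list \<Rightarrow> complex)"
    and f :: "int list \<times> nat list \<Rightarrow> complex"
  assumes "N \<ge> 1" and "n \<ge> 1"
    and "symmetric_laurent n P"
    and \<omega>_linear: "\<And>g h a b. g \<in> F_space N n \<Longrightarrow> h \<in> F_space N n \<Longrightarrow>
           \<omega> (\<lambda>x. a * g x + b * h x) = (\<lambda>e. a * \<omega> g e + b * \<omega> h e)"
    and \<omega>_basis: "\<And>k. length k = n \<Longrightarrow> sorted_wrt (>) k \<Longrightarrow> \<omega> (uhat N n k) = ahat n k"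
    and "f \<in> F_space N n"
  shows "\<omega> (mult_op n P f) = subst_mult N n P (\<omega> f)"
proof -
  note N = assms(1)
  have sumF: "(\<lambda>x. \<Sum>k\<in>S. c k * h k x) \<in> F_space N n \<and>
      \<omega> (\<lambda>x. \<Sum>k\<in>S. c k * h k x) = (\<lambda>e. \<Sum>k\<in>S. c k * \<omega> (h k) e)"
    if "finite S" "\<forall>k\<in>S. h k \<in> F_space N n" for S :: "int list set" and c h
    using that
  proof (induction S rule: finite_induct)
    case empty
    have "\<omega> (\<lambda>x. 0 * (0::complex) + 0 * 0) = (\<lambda>e. 0 * \<omega> (\<lambda>x. 0) e + 0 * \<omega> (\<lambda>x. 0) e)"
      using \<omega>_linear[OF F_zero F_zero, of 0 0] by simp
    then show ?case using F_zero by simp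
  next
    case (insert k S)
    have hk: "h k \<in> F_space N n" and IH: "(\<lambda>x. \<Sum>k\<in>S. c k * h k x) \<in> F_space N n"
      "\<omega> (\<lambda>x. \<Sum>k\<in>S. c k * h k x) = (\<lambda>e. \<Sum>k\<in>S. c k * \<omega> (h k) e)"
      using insert by auto
    have eq: "(\<lambda>x. \<Sum>k\<in>insert k S. c k * h k x) = (\<lambda>x. c k * h k x + 1 * (\<Sum>k\<in>S. c k * h k x))"
      using insert by simp
    show ?case unfolding eq
      using F_lin[OF hk IH(1), of "c k" 1] \<omega>_linear[OF hk IH(1), of "c k" 1] IH(2) insert by simp
  qed
  have omega_phi: "\<omega> g = phi N n g" if g: "g \<in> F_space N n" for g
  proof -
    let ?S = "{k. length k = n \<and> sorted_wrt (>) k \<and> g (pt N k) \<noteq> 0}"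
    have geq: "g = (\<lambda>x. \<Sum>k\<in>?S. g (pt N k) * uhat N n k x)"
      using spanning[OF N g] by blast
    have uF: "\<forall>k\<in>?S. uhat N n k \<in> F_space N n" using uhat_F[OF N] by auto
    have "\<omega> g = (\<lambda>e. \<Sum>k\<in>?S. g (pt N k) * \<omega> (uhat N n k) e)"
      by (subst geq) (rule conjunct2[OF sumF[OF finS[OF N g] uF]])
    also have "\<dots> = (\<lambda>e. \<Sum>k\<in>?S. g (pt N k) * phi N n (uhat N n k) e)"
      by (intro ext sum.cong refl) (simp add: \<omega>_basis phi_uhat[OF N])
    also have "\<dots> = phi N n g"
    proof
      fix e
      show "(\<Sum>k\<in>?S. g (pt N k) * phi N n (uhat N n k) e) = phi N n g e"
        by (subst (2) geq) (simp add: phi_def)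
    qed
    finally show ?thesis .
  qed
  have P: "P \<in> laurent n" using assms(3) unfolding symmetric_laurent_def by simp
  have "\<omega> (mult_op n P f) = phi N n (mult_op n P f)"
    by (rule omega_phi[OF mult_F[OF N assms(3) assms(6)]])
  also have "\<dots> = subst_mult N n P (phi N n f)" by (rule phi_mult[OF N P])
  also have "\<dots> = subst_mult N n P (\<omega> f)" using omega_phi[OF assms(6)] by simp
  finally show ?thesis .
qed

end
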